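(* Assume $\Lambda$ is $b$-dependent for some $b>0$ and $\mathbb{E}[e^{\alpha\Lambda(Q_1)}]<\infty$ for all $\alpha>0$. Let $A\subset\mathbb{R}^d$ be compact, $\alpha>0$, $s_\alpha=\log\mathbb{E}[\exp(\alpha\Lambda(Q_b))]$ and $n=\#\{z\in\mathbb{Z}^d:Q_b(bz)\cap A\neq\emptyset\}$. Then for every $L>0$, $$\log\mathbb{P}(\Lambda(A)\ge L)\le ns_\alpha-2^{-d}\alpha L+d\log 2.$$
   Context: $\Lambda$ is a stationary random locally finite Borel measure on $\mathbb{R}^d$. $Q_a(y)=y+[-a/2,a/2]^d$, $Q_a=Q_a(o)$. $\Lambda$ is $b$-dependent if its restrictions $\Lambda_A,\Lambda_B$ are independent whenever ${\rm dist}(A,B)>b$. *)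

theory Defs
  imports "HOL-Probability.Probability"
begin

definition cube :: "real \<Rightarrow> 'a::euclidean_space \<Rightarrow> 'a set" where
  "cube a y = cbox (y - (a/2) *\<^sub>R One) (y + (a/2) *\<^sub>R One)"

definition lattice :: "'a::euclidean_space set" where
  "lattice = {z. \<forall>i\<in>Basis. z \<bullet> i \<in> \<int>}"

definition random_measure :: "'w measure \<Rightarrow> ('w \<Rightarrow> 'a::euclidean_space measure) \<Rightarrow> bool" where
  "random_measure M Lam \<longleftrightarrow> prob_space M \<and>
     (\<forall>\<omega>\<in>space M. sets (Lam \<omega>) = sets borel \<and>
        (\<forall>K. compact K \<longrightarrow> emeasure (Lam \<omega>) K < \<infinity>)) \<and>
     (\<forall>C\<in>sets borel. (\<lambda>\<omega>. emeasure (Lam \<omega>) C) \<in> borel_measurable M)"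

definition rm_space :: "('a::euclidean_space set \<Rightarrow> ennreal) measure" where
  "rm_space = PiM (sets (borel :: 'a measure)) (\<lambda>_. borel)"

definition restr_rm :: "('w \<Rightarrow> 'a::euclidean_space measure) \<Rightarrow> 'a set \<Rightarrow> 'w \<Rightarrow> ('a set \<Rightarrow> ennreal)" where
  "restr_rm Lam A \<omega> = restrict (\<lambda>C. emeasure (Lam \<omega>) (A \<inter> C)) (sets borel)"

definition shift_rm :: "('w \<Rightarrow> 'a::euclidean_space measure) \<Rightarrow> 'a \<Rightarrow> 'w \<Rightarrow> ('a set \<Rightarrow> ennreal)" where
  "shift_rm Lam y \<omega> = restrict (\<lambda>C. emeasure (Lam \<omega>) ((\<lambda>x. x + y) ` C)) (sets borel)"

definition stationary_rm :: "'w measure \<Rightarrow> ('w \<Rightarrow> 'a::euclidean_space measure) \<Rightarrow> bool" where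
  "stationary_rm M Lam \<longleftrightarrow>
     (\<forall>y. distr M rm_space (shift_rm Lam y) = distr M rm_space (restr_rm Lam UNIV))"

definition b_dependent :: "'w measure \<Rightarrow> ('w \<Rightarrow> 'a::euclidean_space measure) \<Rightarrow> real \<Rightarrow> bool" where
  "b_dependent M Lam b \<longleftrightarrow>
     (\<forall>A B. A \<in> sets borel \<longrightarrow> B \<in> sets borel \<longrightarrow> setdist A B > b \<longrightarrow>
        prob_space.indep_var M rm_space (restr_rm Lam A) rm_space (restr_rm Lam B))"

end

theory Submission
  imports Defs
begin

lemma (in prob_space) indep_var_nn_integral:
  fixes X Y :: "'a \<Rightarrow> ennreal"
  assumes "indep_var borel X borel Y"
  shows "(\<integral>\<^sup>+\<omega>. X \<omega> * Y \<omega> \<partial>M) = (\<integral>\<^sup>+\<omega>. X \<omega> \<partial>M) * (\<integral>\<^sup>+\<omega>. Y \<omega> \<partial>M)"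
proof -
  have *: "(\<lambda>\<omega>. X \<omega> * Y \<omega>) = (\<lambda>\<omega>. \<Prod>i\<in>UNIV. (case_bool X Y i \<omega>))"
    by (simp add: UNIV_bool mult.commute)
  have **: "(\<lambda> _. borel) = case_bool borel borel"
    by (rule ext, metis (full_types) bool.simps(3) bool.simps(4))
  have ind: "indep_vars (\<lambda>_. borel) (case_bool X Y) UNIV"
    using assms unfolding indep_var_def ** .
  show ?thesis
    apply (subst *)
    apply (subst indep_vars_nn_integral[OF _ ind])
    by (auto simp: UNIV_bool mult.commute)
qed

lemma rm_meas:
  assumes "random_measure M Lam" "C \<in> sets borel"
  shows "(\<lambda>\<omega>. emeasure (Lam \<omega>) C) \<in> borel_measurable M"
  using assms unfolding random_measure_def by auto

lemma borel_translate:
  fixes C :: "'a::euclidean_space set"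
  assumes "C \<in> sets borel"
  shows "(\<lambda>x. x + y) ` C \<in> sets borel"
proof -
  have "(\<lambda>x. x + y) ` C = (\<lambda>x. x - y) -` C \<inter> space borel"
    by (auto simp: image_iff) (metis diff_add_cancel)
  also have "\<dots> \<in> sets borel"
    by (rule measurable_sets[OF _ assms]) simp
  finally show ?thesis .
qed

lemma restr_rm_meas:
  fixes Lam :: "'w \<Rightarrow> 'a::euclidean_space measure"
  assumes rm: "random_measure M Lam" and A: "A \<in> sets borel"
  shows "restr_rm Lam A \<in> measurable M rm_space"
proof -
  have "(\<lambda>\<omega> C. restr_rm Lam A \<omega> C) \<in> measurable M rm_space"
    unfolding rm_space_def
  proof (rule measurable_PiM_single')
    fix C :: "'a set" assume "C \<in> sets borel"
    then show "(\<lambda>\<omega>. restr_rm Lam A \<omega> C) \<in> borel_measurable M"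
      using rm_meas[OF rm, of "A \<inter> C"] A by (simp add: restr_rm_def)
  qed (auto simp: restr_rm_def)
  then show ?thesis .
qed

lemma shift_rm_meas:
  fixes Lam :: "'w \<Rightarrow> 'a::euclidean_space measure"
  assumes rm: "random_measure M Lam"
  shows "shift_rm Lam y \<in> measurable M rm_space"
proof -
  have "(\<lambda>\<omega> C. shift_rm Lam y \<omega> C) \<in> measurable M rm_space"
    unfolding rm_space_def
  proof (rule measurable_PiM_single')
    fix C :: "'a set" assume "C \<in> sets borel"
    then show "(\<lambda>\<omega>. shift_rm Lam y \<omega> C) \<in> borel_measurable M"
      using rm_meas[OF rm borel_translate[OF \<open>C \<in> sets borel\<close>, of y]] by (simp add: shift_rm_def)
  qed (auto simp: shift_rm_def)
  then show ?thesis .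
qed

lemma comp_meas:
  assumes "C \<in> sets (borel :: 'a::euclidean_space measure)" "g \<in> borel_measurable (borel :: ennreal measure)"
  shows "(\<lambda>f. g (f C)) \<in> borel_measurable (rm_space :: ('a set \<Rightarrow> ennreal) measure)"
  unfolding rm_space_def
  by (rule measurable_compose[where f="\<lambda>f. f C", OF measurable_component_singleton assms(2)]) (use assms in auto)

lemma stat_transfer:
  fixes Lam :: "'w \<Rightarrow> 'a::euclidean_space measure"
  assumes rm: "random_measure M Lam" and st: "stationary_rm M Lam"
    and C: "C \<in> sets borel" and g: "g \<in> borel_measurable (borel :: ennreal measure)"
  shows "(\<integral>\<^sup>+\<omega>. g (emeasure (Lam \<omega>) ((\<lambda>x. x + y) ` C)) \<partial>M) = (\<integral>\<^sup>+\<omega>. g (emeasure (Lam \<omega>) C) \<partial>M)"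
proof -
  have "(\<integral>\<^sup>+\<omega>. g (emeasure (Lam \<omega>) ((\<lambda>x. x + y) ` C)) \<partial>M) = (\<integral>\<^sup>+\<omega>. g (shift_rm Lam y \<omega> C) \<partial>M)"
    using C by (simp add: shift_rm_def)
  also have "\<dots> = (\<integral>\<^sup>+f. g (f C) \<partial>distr M rm_space (shift_rm Lam y))"
    using shift_rm_meas[OF rm, of y] comp_meas[OF C g] by (subst nn_integral_distr) auto
  also have "\<dots> = (\<integral>\<^sup>+f. g (f C) \<partial>distr M rm_space (restr_rm Lam UNIV))"
    using st unfolding stationary_rm_def by simp
  also have "\<dots> = (\<integral>\<^sup>+\<omega>. g (restr_rm Lam UNIV \<omega> C) \<partial>M)"
    using restr_rm_meas[OF rm, of UNIV] comp_meas[OF C g] by (subst nn_integral_distr) auto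
  also have "\<dots> = (\<integral>\<^sup>+\<omega>. g (emeasure (Lam \<omega>) C) \<partial>M)"
    using C by (simp add: restr_rm_def)
  finally show ?thesis .
qed

lemma mem_cube: "x \<in> cube a y \<longleftrightarrow> (\<forall>i\<in>Basis. \<bar>x \<bullet> i - y \<bullet> i\<bar> \<le> a / 2)"
  unfolding cube_def mem_box
proof (intro ball_cong refl)
  fix i :: 'a assume "i \<in> Basis"
  then show "((y - (a / 2) *\<^sub>R One) \<bullet> i \<le> x \<bullet> i \<and> x \<bullet> i \<le> (y + (a / 2) *\<^sub>R One) \<bullet> i) = (\<bar>x \<bullet> i - y \<bullet> i\<bar> \<le> a / 2)"
    by (cases "x \<bullet> i \<le> y \<bullet> i") (auto simp: inner_diff_left inner_add_left inner_sum_Basis)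
qed

lemma cube_translate: "cube a (y::'a::euclidean_space) = (\<lambda>x. x + y) ` cube a 0"
proof -
  have "x \<in> cube a y \<longleftrightarrow> x - y \<in> cube a 0" for x
    by (simp add: mem_cube inner_simps)
  then show ?thesis by (auto simp: image_iff) (metis diff_add_cancel)
qed

lemma cube_compact: "compact (cube a y)"
  unfolding cube_def by simp

lemma cube_borel: "cube a y \<in> sets borel"
  unfolding cube_def by simp

lemma cube_center: "a \<ge> 0 \<Longrightarrow> y \<in> cube a y"
  by (simp add: mem_cube)

lemma cube_mono: "a \<le> c \<Longrightarrow> cube a y \<subseteq> cube c y"
  by (auto simp: mem_cube) (meson Basis_le_norm order_trans divide_right_mono zero_le_numeral)

lemma lattice_box_finite:
  "finite {z::'a::euclidean_space. z \<in> lattice \<and> (\<forall>i\<in>Basis. \<bar>z \<bullet> i\<bar> \<le> K)}"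
proof -
  let ?f = "\<lambda>z::'a. (\<lambda>i\<in>Basis. \<lfloor>z \<bullet> i\<rfloor>)"
  let ?B = "PiE Basis (\<lambda>_. {-\<lceil>K\<rceil>..\<lceil>K\<rceil>})"
  show ?thesis
  proof (rule inj_on_finite[where f = ?f and B = ?B])
    show "inj_on ?f {z. z \<in> lattice \<and> (\<forall>i\<in>Basis. \<bar>z \<bullet> i\<bar> \<le> K)}"
    proof (rule inj_onI)
      fix x y :: 'a
      assume x: "x \<in> {z. z \<in> lattice \<and> (\<forall>i\<in>Basis. \<bar>z \<bullet> i\<bar> \<le> K)}"
        and y: "y \<in> {z. z \<in> lattice \<and> (\<forall>i\<in>Basis. \<bar>z \<bullet> i\<bar> \<le> K)}"
        and e: "?f x = ?f y"
      show "x = y"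
      proof (rule euclidean_eqI)
        fix i :: 'a assume i: "i \<in> Basis"
        have "\<lfloor>x \<bullet> i\<rfloor> = \<lfloor>y \<bullet> i\<rfloor>" using fun_cong[OF e, of i] i by simp
        moreover have "x \<bullet> i \<in> \<int>" "y \<bullet> i \<in> \<int>" using x y i by (auto simp: lattice_def)
        ultimately show "x \<bullet> i = y \<bullet> i" by (metis floor_of_int Ints_cases)
      qed
    qed
    show "?f ` {z. z \<in> lattice \<and> (\<forall>i\<in>Basis. \<bar>z \<bullet> i\<bar> \<le> K)} \<subseteq> ?B"
    proof clarify
      fix z :: 'a assume z: "z \<in> lattice" "\<forall>i\<in>Basis. \<bar>z \<bullet> i\<bar> \<le> K"
      show "?f z \<in> ?B"
      proof (rule PiE_I)
        fix i :: 'a assume i: "i \<in> Basis"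
        have "\<bar>z \<bullet> i\<bar> \<le> K" using z i by auto
        then have "- \<lceil>K\<rceil> \<le> \<lfloor>z \<bullet> i\<rfloor> \<and> \<lfloor>z \<bullet> i\<rfloor> \<le> \<lceil>K\<rceil>"
          by (smt (verit, ccfv_SIG) ceiling_correct floor_le_ceiling floor_less_cancel le_floor_iff of_int_minus abs_le_iff)
        then show "?f z i \<in> {-\<lceil>K\<rceil>..\<lceil>K\<rceil>}" using i by simp
      qed auto
    qed
  qed (intro finite_PiE; auto)
qed

lemma cover_finite:
  fixes A :: "'a::euclidean_space set"
  assumes "compact A" "b > 0"
  shows "finite {z \<in> lattice. cube b (b *\<^sub>R z) \<inter> A \<noteq> {}}"
proof -
  obtain R where R: "\<And>x. x \<in> A \<Longrightarrow> norm x \<le> R"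
    using compact_imp_bounded[OF assms(1)] bounded_iff by blast
  have "{z \<in> lattice. cube b (b *\<^sub>R z) \<inter> A \<noteq> {}} \<subseteq>
        {z. z \<in> lattice \<and> (\<forall>i\<in>Basis. \<bar>z \<bullet> i\<bar> \<le> (R + b/2) / b)}"
  proof
    fix z :: 'a assume "z \<in> {z \<in> lattice. cube b (b *\<^sub>R z) \<inter> A \<noteq> {}}"
    then have z: "z \<in> lattice" "cube b (b *\<^sub>R z) \<inter> A \<noteq> {}" by auto
    then obtain x where x: "x \<in> A" "x \<in> cube b (b *\<^sub>R z)" by auto
    have "\<forall>i\<in>Basis. \<bar>z \<bullet> i\<bar> \<le> (R + b/2) / b"
    proof
      fix i :: 'a assume i: "i \<in> Basis"
      have "\<bar>x \<bullet> i - b * (z \<bullet> i)\<bar> \<le> b / 2" using x(2) i by (simp add: mem_cube)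
      moreover have "\<bar>x \<bullet> i\<bar> \<le> R" using R[OF x(1)] Basis_le_norm[OF i, of x] by linarith
      moreover have "b * \<bar>z \<bullet> i\<bar> = \<bar>b * (z \<bullet> i)\<bar>" using assms(2) by (simp add: abs_mult)
      ultimately have "b * \<bar>z \<bullet> i\<bar> \<le> R + b/2"
        by arith
      then show "\<bar>z \<bullet> i\<bar> \<le> (R + b/2) / b" using assms(2) by (simp add: field_simps)
    qed
    then show "z \<in> {z. z \<in> lattice \<and> (\<forall>i\<in>Basis. \<bar>z \<bullet> i\<bar> \<le> (R + b/2) / b)}" using z by simp
  qed
  then show ?thesis by (rule finite_subset) (rule lattice_box_finite)
qed

lemma cover_cover:
  fixes A :: "'a::euclidean_space set"
  assumes "b > 0" "x \<in> A"
  shows "\<exists>z \<in> {z \<in> lattice. cube b (b *\<^sub>R z) \<inter> A \<noteq> {}}. x \<in> cube b (b *\<^sub>R z)"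
proof -
  define z :: 'a where "z = (\<Sum>i\<in>Basis. of_int (round (x \<bullet> i / b)) *\<^sub>R i)"
  have zi: "z \<bullet> i = of_int (round (x \<bullet> i / b))" if "i \<in> Basis" for i
    using that by (simp add: z_def inner_sum_left inner_Basis if_distrib cong: if_cong)
  have "z \<in> lattice" by (simp add: lattice_def zi)
  moreover have "x \<in> cube b (b *\<^sub>R z)"
  proof (unfold mem_cube, intro ballI)
    fix i :: 'a assume i: "i \<in> Basis"
    have "\<bar>of_int (round (x \<bullet> i / b)) - x \<bullet> i / b\<bar> \<le> 1/2" by (rule of_int_round_abs_le)
    then have "b * \<bar>of_int (round (x \<bullet> i / b)) - x \<bullet> i / b\<bar> \<le> b * (1/2)"
      using assms(1) by (intro mult_left_mono) auto
    moreover have "b * \<bar>of_int (round (x \<bullet> i / b)) - x \<bullet> i / b\<bar> = \<bar>x \<bullet> i - b * of_int (round (x \<bullet> i / b))\<bar>"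
    proof -
      have "x \<bullet> i - b * of_int (round (x \<bullet> i / b)) = b * (x \<bullet> i / b - of_int (round (x \<bullet> i / b)))"
        using assms(1) by (simp add: field_simps)
      then show ?thesis using assms(1) by (simp add: abs_mult abs_minus_commute)
    qed
    ultimately show "\<bar>x \<bullet> i - (b *\<^sub>R z) \<bullet> i\<bar> \<le> b / 2" using i by (simp add: zi)
  qed
  ultimately show ?thesis using assms by blast
qed

lemma parity_sep:
  fixes z z' :: "'a::euclidean_space"
  assumes "z \<in> lattice" "z' \<in> lattice" "z \<noteq> z'"
    and "(\<lambda>i\<in>Basis. even \<lfloor>z \<bullet> i\<rfloor>) = (\<lambda>i\<in>Basis. even \<lfloor>z' \<bullet> i\<rfloor>)"
  shows "\<exists>i\<in>Basis. \<bar>z \<bullet> i - z' \<bullet> i\<bar> \<ge> 2"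
proof -
  obtain i where i: "i \<in> Basis" "z \<bullet> i \<noteq> z' \<bullet> i"
    using assms(3) euclidean_eqI by blast
  obtain m where m: "z \<bullet> i = of_int m" using assms(1) i(1) by (auto simp: lattice_def elim!: Ints_cases)
  obtain m' where m': "z' \<bullet> i = of_int m'" using assms(2) i(1) by (auto simp: lattice_def elim!: Ints_cases)
  have "even m = even m'" using fun_cong[OF assms(4), of i] i(1) m m' by simp
  moreover have "m \<noteq> m'" using i(2) m m' by auto
  ultimately have "\<bar>m - m'\<bar> \<ge> 2" by presburger
  then have "\<bar>z \<bullet> i - z' \<bullet> i\<bar> \<ge> 2" using m m'
    by (metis of_int_abs of_int_diff of_int_le_iff of_int_numeral)
  then show ?thesis using i by blast
qed

lemma sep_dist:
  fixes z z' x y :: "'a::euclidean_space"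
  assumes "i \<in> Basis" "\<bar>z \<bullet> i - z' \<bullet> i\<bar> \<ge> 2" "b > 0" "x \<in> cube s (b *\<^sub>R z)" "y \<in> cube s (b *\<^sub>R z')"
  shows "dist x y \<ge> 2 * b - s"
proof -
  have 1: "\<bar>x \<bullet> i - b * (z \<bullet> i)\<bar> \<le> s/2" "\<bar>y \<bullet> i - b * (z' \<bullet> i)\<bar> \<le> s/2"
    using assms by (auto simp: mem_cube)
  have "b * 2 \<le> b * \<bar>z \<bullet> i - z' \<bullet> i\<bar>" using assms(2,3) by (intro mult_left_mono) auto
  moreover have "\<bar>b * (z \<bullet> i) - b * (z' \<bullet> i)\<bar> = b * \<bar>z \<bullet> i - z' \<bullet> i\<bar>"
    using assms(3) by (simp add: right_diff_distrib[symmetric] abs_mult)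
  ultimately have 2: "2 * b \<le> \<bar>b * (z \<bullet> i) - b * (z' \<bullet> i)\<bar>" by simp
  have "\<bar>(x - y) \<bullet> i\<bar> \<le> norm (x - y)" by (rule Basis_le_norm[OF assms(1)])
  then show ?thesis using 1 2 by (simp add: dist_norm inner_diff_left) (smt (verit))
qed

lemma rm_sets:
  assumes "random_measure M Lam" "\<omega> \<in> space M"
  shows "sets (Lam \<omega>) = sets borel"
  using assms unfolding random_measure_def by auto

lemma rm_fin:
  assumes "random_measure M Lam" "\<omega> \<in> space M" "compact K"
  shows "emeasure (Lam \<omega>) K < \<infinity>"
  using assms unfolding random_measure_def by auto

lemma rm_prob: "random_measure M Lam \<Longrightarrow> prob_space M"
  unfolding random_measure_def by auto

lemma rm_meas_real:
  assumes "random_measure M Lam" "C \<in> sets borel"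
  shows "(\<lambda>\<omega>. measure (Lam \<omega>) C) \<in> borel_measurable M"
  unfolding measure_def by (rule borel_measurable_enn2real[OF rm_meas[OF assms]])

lemma rm_meas_exp:
  assumes "random_measure M Lam" "C \<in> sets borel"
  shows "(\<lambda>\<omega>. ennreal (exp (c * measure (Lam \<omega>) C))) \<in> borel_measurable M"
  by (rule measurable_compose[OF rm_meas_real[OF assms], of "\<lambda>x. ennreal (exp (c * x))"]) measurable

lemma exp_sum_bound:
  fixes X :: "'b \<Rightarrow> real"
  assumes "finite F" "\<And>z. z \<in> F \<Longrightarrow> X z \<ge> 0" "\<beta> \<ge> 0"
  shows "exp (\<beta> * (\<Sum>z\<in>F. X z)) \<le> 1 + (\<Sum>z\<in>F. exp (real (card F) * \<beta> * X z))"
proof (cases "F = {}")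
  case True then show ?thesis by simp
next
  case False
  obtain z0 where z0: "z0 \<in> F" "Max (X ` F) = X z0"
    using obtains_MAX[OF assms(1) False] by metis
  have le: "X z \<le> X z0" if "z \<in> F" for z
    using Max_ge[of "X ` F" "X z"] assms(1) that z0(2) by auto
  have "(\<Sum>z\<in>F. X z) \<le> (\<Sum>z\<in>F. X z0)" by (rule sum_mono) (rule le)
  then have "(\<Sum>z\<in>F. X z) \<le> real (card F) * X z0" by simp
  then have "exp (\<beta> * (\<Sum>z\<in>F. X z)) \<le> exp (real (card F) * \<beta> * X z0)"
    using assms(3) by (simp add: mult_left_mono mult.assoc mult.left_commute)
  also have "\<dots> \<le> (\<Sum>z\<in>F. exp (real (card F) * \<beta> * X z))"
    by (rule member_le_sum[OF z0(1)]) (auto simp: assms(1))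
  finally show ?thesis by simp
qed

lemma Fin:
  fixes M :: "'w measure" and Lam :: "'w \<Rightarrow> 'a::euclidean_space measure"
  assumes rm: "random_measure M Lam" and stat: "stationary_rm M Lam"
    and mom: "\<And>\<beta>. \<beta> > 0 \<Longrightarrow>
       (\<integral>\<^sup>+ \<omega>. ennreal (exp (\<beta> * measure (Lam \<omega>) (cube 1 0))) \<partial>M) < \<infinity>"
    and K: "compact K" and \<beta>: "\<beta> > 0"
  shows "(\<integral>\<^sup>+ \<omega>. ennreal (exp (\<beta> * measure (Lam \<omega>) K)) \<partial>M) < \<infinity>"
proof -
  interpret prob_space M by (rule rm_prob[OF rm])
  define F where "F = {z \<in> lattice. cube 1 (1 *\<^sub>R z) \<inter> K \<noteq> {}}"
  have finF: "finite F" unfolding F_def by (rule cover_finite[OF K]) simp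
  have covK: "K \<subseteq> (\<Union>z\<in>F. cube 1 z)"
    using cover_cover[of 1 _ K] unfolding F_def by fastforce
  define k where "k = real (card F)"
  have Kb: "K \<in> sets borel" using K by (simp add: compact_imp_closed borel_closed)
  have bound: "exp (\<beta> * measure (Lam \<omega>) K) \<le> 1 + (\<Sum>z\<in>F. exp (k * \<beta> * measure (Lam \<omega>) (cube 1 z)))"
    if \<omega>: "\<omega> \<in> space M" for \<omega>
  proof -
    have sets: "sets (Lam \<omega>) = sets borel" by (rule rm_sets[OF rm \<omega>])
    have "measure (Lam \<omega>) K \<le> measure (Lam \<omega>) (\<Union>z\<in>F. cube 1 z)"
    proof (rule measure_mono_fmeasurable[OF covK])
      show "K \<in> sets (Lam \<omega>)" using Kb sets by simp
      have "compact (\<Union>z\<in>F. cube 1 z)" using finF by (intro compact_UN) (auto simp: cube_compact)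
      then show "(\<Union>z\<in>F. cube 1 z) \<in> fmeasurable (Lam \<omega>)"
        using rm_fin[OF rm \<omega>] sets unfolding fmeasurable_def
        by (auto simp: compact_imp_closed borel_closed)
    qed
    also have "\<dots> \<le> (\<Sum>z\<in>F. measure (Lam \<omega>) (cube 1 z))"
      using finF sets rm_fin[OF rm \<omega> cube_compact]
      by (intro measure_subadditive_finite) (auto simp: cube_borel less_top[symmetric])
    finally have "exp (\<beta> * measure (Lam \<omega>) K) \<le> exp (\<beta> * (\<Sum>z\<in>F. measure (Lam \<omega>) (cube 1 z)))"
      using \<beta> by simp
    also have "\<dots> \<le> 1 + (\<Sum>z\<in>F. exp (k * \<beta> * measure (Lam \<omega>) (cube 1 z)))"
      unfolding k_def by (rule exp_sum_bound[OF finF]) (use \<beta> in auto)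
    finally show ?thesis .
  qed
  have "(\<integral>\<^sup>+ \<omega>. ennreal (exp (\<beta> * measure (Lam \<omega>) K)) \<partial>M)
      \<le> (\<integral>\<^sup>+ \<omega>. (1 + (\<Sum>z\<in>F. ennreal (exp (k * \<beta> * measure (Lam \<omega>) (cube 1 z))))) \<partial>M)"
  proof (intro nn_integral_mono)
    fix \<omega> assume \<omega>: "\<omega> \<in> space M"
    have "ennreal (exp (\<beta> * measure (Lam \<omega>) K)) \<le> ennreal (1 + (\<Sum>z\<in>F. exp (k * \<beta> * measure (Lam \<omega>) (cube 1 z))))"
      by (rule ennreal_leI[OF bound[OF \<omega>]])
    also have "\<dots> = 1 + (\<Sum>z\<in>F. ennreal (exp (k * \<beta> * measure (Lam \<omega>) (cube 1 z))))"
      by (subst ennreal_plus) (auto simp: sum_nonneg)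
    finally show "ennreal (exp (\<beta> * measure (Lam \<omega>) K)) \<le> 1 + (\<Sum>z\<in>F. ennreal (exp (k * \<beta> * measure (Lam \<omega>) (cube 1 z))))" .
  qed
  also have "\<dots> = (\<integral>\<^sup>+ \<omega>. 1 \<partial>M) + (\<integral>\<^sup>+ \<omega>. (\<Sum>z\<in>F. ennreal (exp (k * \<beta> * measure (Lam \<omega>) (cube 1 z)))) \<partial>M)"
    using rm_meas_exp[OF rm cube_borel] by (intro nn_integral_add borel_measurable_sum) auto
  also have "\<dots> = 1 + (\<Sum>z\<in>F. \<integral>\<^sup>+ \<omega>. ennreal (exp (k * \<beta> * measure (Lam \<omega>) (cube 1 z))) \<partial>M)"
    using rm_meas_exp[OF rm cube_borel]
    by (subst nn_integral_sum) (auto simp: emeasure_space_1)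
  also have "\<dots> < \<infinity>"
  proof -
    have "(\<integral>\<^sup>+ \<omega>. ennreal (exp (k * \<beta> * measure (Lam \<omega>) (cube 1 z))) \<partial>M) < \<infinity>" if z: "z \<in> F" for z
    proof -
      have "card F > 0" using z finF by (auto simp: card_gt_0_iff)
      then have kpos: "k * \<beta> > 0" using \<beta> unfolding k_def by simp
      have "(\<integral>\<^sup>+ \<omega>. ennreal (exp (k * \<beta> * measure (Lam \<omega>) (cube 1 z))) \<partial>M)
          = (\<integral>\<^sup>+ \<omega>. (\<lambda>x. ennreal (exp (k * \<beta> * enn2real x))) (emeasure (Lam \<omega>) ((\<lambda>x. x + z) ` cube 1 0)) \<partial>M)"
        by (simp add: measure_def cube_translate[of 1 z])
      also have "\<dots> = (\<integral>\<^sup>+ \<omega>. (\<lambda>x. ennreal (exp (k * \<beta> * enn2real x))) (emeasure (Lam \<omega>) (cube 1 0)) \<partial>M)"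
        by (rule stat_transfer[OF rm stat cube_borel]) measurable
      also have "\<dots> = (\<integral>\<^sup>+ \<omega>. ennreal (exp ((k * \<beta>) * measure (Lam \<omega>) (cube 1 0))) \<partial>M)"
        by (simp add: measure_def)
      also have "\<dots> < \<infinity>" by (rule mom[OF kpos])
      finally show ?thesis .
    qed
    then show ?thesis using finF by (simp add: less_top[symmetric])
  qed
  finally show ?thesis .
qed

lemma ennreal_arch_zero:
  fixes e B :: ennreal
  assumes "\<And>N::nat. of_nat N * e \<le> B" "B < \<infinity>"
  shows "e = 0"
proof (rule ccontr)
  assume ne: "e \<noteq> 0"
  have "e \<le> B" using assms(1)[of 1] by simp
  then have "e < top" using assms(2) by (simp add: le_less_trans)
  then obtain r where r: "e = ennreal r" "r \<ge> 0" by (cases e) auto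
  obtain b where b: "B = ennreal b" "b \<ge> 0" using assms(2) by (cases B) auto
  have rpos: "r > 0" using ne r by (cases "r = 0") auto
  obtain N :: nat where N: "b / r < real N" using reals_Archimedean2 by blast
  have "ennreal (real N * r) \<le> ennreal b"
    using assms(1)[of N] r b by (simp add: ennreal_of_nat_eq_real_of_nat ennreal_mult)
  then have "real N * r \<le> b" using b(2) by (simp add: ennreal_le_iff)
  moreover have "b < real N * r" using N rpos by (simp add: field_simps)
  ultimately show False by simp
qed

lemma HP:
  fixes M :: "'w measure" and Lam :: "'w \<Rightarrow> 'a::euclidean_space measure"
  assumes rm: "random_measure M Lam" and stat: "stationary_rm M Lam"
    and mom: "\<And>\<beta>. \<beta> > 0 \<Longrightarrow>
       (\<integral>\<^sup>+ \<omega>. ennreal (exp (\<beta> * measure (Lam \<omega>) (cube 1 0))) \<partial>M) < \<infinity>"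
    and K: "compact K" and i: "i \<in> Basis"
  shows "AE \<omega> in M. emeasure (Lam \<omega>) (K \<inter> {x. x \<bullet> i = t}) = 0"
proof -
  interpret prob_space M by (rule rm_prob[OF rm])
  obtain R where R: "\<And>x. x \<in> K \<Longrightarrow> norm x \<le> R"
    using compact_imp_bounded[OF K] bounded_iff by blast
  define BB where "BB = (\<lambda>r::real. cbox (- (r *\<^sub>R One)) (r *\<^sub>R One :: 'a))"
  have memBB: "x \<in> BB r \<longleftrightarrow> (\<forall>j\<in>Basis. \<bar>x \<bullet> j\<bar> \<le> r)" for x r
    unfolding BB_def mem_box by (intro ball_cong refl) (auto simp: inner_sum_Basis abs_le_iff)
  define S0 where "S0 = BB R \<inter> {x. x \<bullet> i = 0}"
  define T where "T = (\<lambda>t. (\<lambda>x. x + t *\<^sub>R i) ` S0)"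
  have S0b: "S0 \<in> sets borel" unfolding S0_def BB_def
    by (intro borel_closed closed_Int closed_cbox closed_Collect_eq continuous_intros)
  have Tb: "T t \<in> sets borel" for t unfolding T_def by (rule borel_translate[OF S0b])
  have memT: "x \<in> T t \<longleftrightarrow> x \<bullet> i = t \<and> (\<forall>j\<in>Basis. j \<noteq> i \<longrightarrow> \<bar>x \<bullet> j\<bar> \<le> R) \<and> 0 \<le> R" for x t
  proof -
    have "x \<in> T t \<longleftrightarrow> x - t *\<^sub>R i \<in> S0"
      unfolding T_def by (auto simp: image_iff) (metis diff_add_cancel)
    also have "\<dots> \<longleftrightarrow> (\<forall>j\<in>Basis. \<bar>(x - t *\<^sub>R i) \<bullet> j\<bar> \<le> R) \<and> x \<bullet> i = t"
      using i by (simp add: S0_def memBB inner_diff_left)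
    also have "\<dots> \<longleftrightarrow> x \<bullet> i = t \<and> (\<forall>j\<in>Basis. j \<noteq> i \<longrightarrow> \<bar>x \<bullet> j\<bar> \<le> R) \<and> 0 \<le> R"
      using i by (auto simp: inner_diff_left inner_Basis)
    finally show ?thesis .
  qed
  have KT: "K \<inter> {x. x \<bullet> i = t} \<subseteq> T t"
  proof
    fix x assume x: "x \<in> K \<inter> {x. x \<bullet> i = t}"
    have "\<bar>x \<bullet> j\<bar> \<le> R" if "j \<in> Basis" for j
      using R[of x] x Basis_le_norm[OF that, of x] by auto
    moreover have "0 \<le> R" using R x by (meson IntD1 norm_ge_zero order_trans)
    ultimately show "x \<in> T t" using x by (simp add: memT)
  qed
  have TB: "T t \<subseteq> BB (R + 1)" if "0 \<le> t" "t \<le> 1" for t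
  proof
    fix x assume "x \<in> T t"
    then have x: "x \<bullet> i = t" "\<forall>j\<in>Basis. j \<noteq> i \<longrightarrow> \<bar>x \<bullet> j\<bar> \<le> R" "0 \<le> R" by (auto simp: memT)
    show "x \<in> BB (R + 1)" unfolding memBB
    proof
      fix j :: 'a assume j: "j \<in> Basis"
      show "\<bar>x \<bullet> j\<bar> \<le> R + 1"
        using x that j by (cases "j = i") auto
    qed
  qed
  have Tdisj: "T s \<inter> T t = {}" if "s \<noteq> t" for s t
    using that by (auto simp: memT)
  define e where "e = (\<integral>\<^sup>+ \<omega>. emeasure (Lam \<omega>) S0 \<partial>M)"
  have eT: "(\<integral>\<^sup>+ \<omega>. emeasure (Lam \<omega>) (T t) \<partial>M) = e" for t
    unfolding e_def T_def by (rule stat_transfer[OF rm stat S0b, of "\<lambda>x. x"]) simp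
  define Bint where "Bint = (\<integral>\<^sup>+ \<omega>. emeasure (Lam \<omega>) (BB (R + 1)) \<partial>M)"
  have BBc: "compact (BB r)" for r unfolding BB_def by simp
  have BBb: "BB r \<in> sets borel" for r unfolding BB_def by simp
  have Bfin: "Bint < \<infinity>"
  proof -
    have "Bint \<le> (\<integral>\<^sup>+ \<omega>. ennreal (exp (1 * measure (Lam \<omega>) (BB (R + 1)))) \<partial>M)"
      unfolding Bint_def
    proof (intro nn_integral_mono)
      fix \<omega> assume \<omega>: "\<omega> \<in> space M"
      have "emeasure (Lam \<omega>) (BB (R + 1)) = ennreal (measure (Lam \<omega>) (BB (R + 1)))"
        using rm_fin[OF rm \<omega> BBc, of "R + 1"] by (intro emeasure_eq_ennreal_measure) simp
      also have "\<dots> \<le> ennreal (exp (1 * measure (Lam \<omega>) (BB (R + 1))))"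
        by (intro ennreal_leI) (smt (verit) exp_ge_add_one_self)
      finally show "emeasure (Lam \<omega>) (BB (R + 1)) \<le> ennreal (exp (1 * measure (Lam \<omega>) (BB (R + 1))))" .
    qed
    also have "\<dots> < \<infinity>" using Fin[OF rm stat mom BBc, of 1 "R + 1"] by simp
    finally show ?thesis .
  qed
  define tt where "tt = (\<lambda>j::nat. 1 / (real j + 1))"
  have tt_inj: "tt j \<noteq> tt k" if "j \<noteq> k" for j k
    using that unfolding tt_def by (simp add: field_simps)
  have tt_range: "0 \<le> tt j" "tt j \<le> 1" for j unfolding tt_def by (auto simp: field_simps)
  have "of_nat N * e \<le> Bint" for N
  proof -
    have "of_nat N * e = (\<Sum>j<N. \<integral>\<^sup>+ \<omega>. emeasure (Lam \<omega>) (T (tt j)) \<partial>M)"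
      by (simp add: eT)
    also have "\<dots> = (\<integral>\<^sup>+ \<omega>. (\<Sum>j<N. emeasure (Lam \<omega>) (T (tt j))) \<partial>M)"
      using rm_meas[OF rm Tb] by (intro nn_integral_sum[symmetric]) auto
    also have "\<dots> \<le> Bint" unfolding Bint_def
    proof (intro nn_integral_mono)
      fix \<omega> assume \<omega>: "\<omega> \<in> space M"
      have sets: "sets (Lam \<omega>) = sets borel" by (rule rm_sets[OF rm \<omega>])
      have "(\<Sum>j<N. emeasure (Lam \<omega>) (T (tt j))) = emeasure (Lam \<omega>) (\<Union>j<N. T (tt j))"
        using sets Tb Tdisj tt_inj by (intro sum_emeasure) (auto simp: disjoint_family_on_def)
      also have "\<dots> \<le> emeasure (Lam \<omega>) (BB (R + 1))"
        using sets BBb TB[OF tt_range] by (intro emeasure_mono) auto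
      finally show "(\<Sum>j<N. emeasure (Lam \<omega>) (T (tt j))) \<le> emeasure (Lam \<omega>) (BB (R + 1))" .
    qed
    finally show ?thesis .
  qed
  then have "e = 0" using ennreal_arch_zero Bfin by blast
  then have "(\<integral>\<^sup>+ \<omega>. emeasure (Lam \<omega>) (T t) \<partial>M) = 0" by (simp add: eT)
  then have "AE \<omega> in M. emeasure (Lam \<omega>) (T t) = 0"
    using rm_meas[OF rm Tb] by (simp add: nn_integral_0_iff_AE)
  then show ?thesis
  proof (rule AE_mp, intro AE_I2 impI)
    fix \<omega> assume \<omega>: "\<omega> \<in> space M" and z: "emeasure (Lam \<omega>) (T t) = 0"
    have sets: "sets (Lam \<omega>) = sets borel" by (rule rm_sets[OF rm \<omega>])
    have "emeasure (Lam \<omega>) (K \<inter> {x. x \<bullet> i = t}) \<le> emeasure (Lam \<omega>) (T t)"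
      using sets Tb KT by (intro emeasure_mono) auto
    then show "emeasure (Lam \<omega>) (K \<inter> {x. x \<bullet> i = t}) = 0" using z by simp
  qed
qed

definition gexp :: "real \<Rightarrow> ennreal \<Rightarrow> ennreal" where
  "gexp \<alpha> x = ennreal (exp (\<alpha> * enn2real x))"

lemma gexp_meas: "gexp \<alpha> \<in> borel_measurable borel"
  unfolding gexp_def by measurable

lemma gexp_add: "a < \<infinity> \<Longrightarrow> c < \<infinity> \<Longrightarrow> gexp \<alpha> (a + c) = gexp \<alpha> a * gexp \<alpha> c"
  unfolding gexp_def by (simp add: enn2real_plus distrib_left exp_add ennreal_mult)

lemma gexp_zero: "gexp \<alpha> 0 = 1"
  unfolding gexp_def by simp

lemma gexp_mono: "\<alpha> \<ge> 0 \<Longrightarrow> a \<le> c \<Longrightarrow> c < \<infinity> \<Longrightarrow> gexp \<alpha> a \<le> gexp \<alpha> c"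
  unfolding gexp_def by (intro ennreal_leI) (simp add: enn2real_mono mult_left_mono)

lemma indep_prod:
  fixes M :: "'w measure" and Lam :: "'w \<Rightarrow> 'a::euclidean_space measure"
  assumes rm: "random_measure M Lam" and dep: "b_dependent M Lam b" and b: "b > 0"
    and s: "0 \<le> s" "s < b" and F: "finite F"
  shows "(\<forall>z\<in>F. \<forall>z'\<in>F. z \<noteq> z' \<longrightarrow> (\<exists>i\<in>Basis. 2 \<le> \<bar>z \<bullet> i - z' \<bullet> i\<bar>)) \<Longrightarrow>
    (\<integral>\<^sup>+ \<omega>. gexp \<alpha> (emeasure (Lam \<omega>) (\<Union>z\<in>F. cube s (b *\<^sub>R z))) \<partial>M)
     = (\<Prod>z\<in>F. \<integral>\<^sup>+ \<omega>. gexp \<alpha> (emeasure (Lam \<omega>) (cube s (b *\<^sub>R z))) \<partial>M)"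
  using F
proof (induction F rule: finite_induct)
  case empty
  interpret prob_space M by (rule rm_prob[OF rm])
  show ?case by (simp add: gexp_zero emeasure_space_1)
next
  case (insert z F)
  interpret prob_space M by (rule rm_prob[OF rm])
  define Q where "Q = cube s (b *\<^sub>R z)"
  define U where "U = (\<Union>z'\<in>F. cube s (b *\<^sub>R z'))"
  have sepF: "\<forall>z\<in>F. \<forall>z'\<in>F. z \<noteq> z' \<longrightarrow> (\<exists>i\<in>Basis. 2 \<le> \<bar>z \<bullet> i - z' \<bullet> i\<bar>)"
    using insert.prems by blast
  have IH: "(\<integral>\<^sup>+ \<omega>. gexp \<alpha> (emeasure (Lam \<omega>) U) \<partial>M)
     = (\<Prod>z\<in>F. \<integral>\<^sup>+ \<omega>. gexp \<alpha> (emeasure (Lam \<omega>) (cube s (b *\<^sub>R z))) \<partial>M)"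
    unfolding U_def by (rule insert.IH[OF sepF])
  have Qb: "Q \<in> sets borel" unfolding Q_def by (rule cube_borel)
  have Ub: "U \<in> sets borel" unfolding U_def using insert.hyps(1) by (auto intro!: sets.finite_UN simp: cube_borel)
  have Uc: "compact U" unfolding U_def using insert.hyps(1) by (intro compact_UN) (auto simp: cube_compact)
  have far: "2 * b - s \<le> dist x y" if x: "x \<in> Q" and y: "y \<in> U" for x y
  proof -
    obtain z' where z': "z' \<in> F" "y \<in> cube s (b *\<^sub>R z')" using y unfolding U_def by auto
    have "z \<noteq> z'" using z' insert.hyps(2) by auto
    then obtain i where i: "i \<in> Basis" "2 \<le> \<bar>z \<bullet> i - z' \<bullet> i\<bar>" using insert.prems z' by blast
    show ?thesis by (rule sep_dist[OF i b]) (use x z' in \<open>auto simp: Q_def\<close>)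
  qed
  have disj: "Q \<inter> U = {}"
  proof (rule ccontr)
    assume "Q \<inter> U \<noteq> {}"
    then obtain x where "x \<in> Q" "x \<in> U" by auto
    then have "2 * b - s \<le> dist x x" by (rule far)
    then show False using s b by simp
  qed
  have split: "(\<integral>\<^sup>+ \<omega>. gexp \<alpha> (emeasure (Lam \<omega>) (\<Union>z\<in>insert z F. cube s (b *\<^sub>R z))) \<partial>M)
      = (\<integral>\<^sup>+ \<omega>. gexp \<alpha> (emeasure (Lam \<omega>) Q) * gexp \<alpha> (emeasure (Lam \<omega>) U) \<partial>M)"
  proof (rule nn_integral_cong)
    fix \<omega> assume \<omega>: "\<omega> \<in> space M"
    have sets: "sets (Lam \<omega>) = sets borel" by (rule rm_sets[OF rm \<omega>])
    have "(\<Union>z\<in>insert z F. cube s (b *\<^sub>R z)) = Q \<union> U" by (simp add: Q_def U_def)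
    then have "emeasure (Lam \<omega>) (\<Union>z\<in>insert z F. cube s (b *\<^sub>R z)) = emeasure (Lam \<omega>) Q + emeasure (Lam \<omega>) U"
      using sets Qb Ub disj by (simp add: plus_emeasure)
    then show "gexp \<alpha> (emeasure (Lam \<omega>) (\<Union>z\<in>insert z F. cube s (b *\<^sub>R z))) = gexp \<alpha> (emeasure (Lam \<omega>) Q) * gexp \<alpha> (emeasure (Lam \<omega>) U)"
      using rm_fin[OF rm \<omega> Uc] rm_fin[OF rm \<omega> cube_compact] by (simp add: gexp_add Q_def)
  qed
  show ?case
  proof (cases "F = {}")
    case True
    then show ?thesis by (simp add: U_def)
  next
    case False
    have Qne: "Q \<noteq> {}" using cube_center[OF s(1)] unfolding Q_def by auto
    have Une: "U \<noteq> {}" using False cube_center[OF s(1)] unfolding U_def by auto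
    have "2 * b - s \<le> setdist Q U" by (rule le_setdistI[OF Qne Une far])
    then have "setdist Q U > b" using s by simp
    then have ind: "indep_var rm_space (restr_rm Lam Q) rm_space (restr_rm Lam U)"
      using dep Qb Ub unfolding b_dependent_def by blast
    have ind2: "indep_var borel ((\<lambda>f. gexp \<alpha> (f UNIV)) \<circ> restr_rm Lam Q) borel ((\<lambda>f. gexp \<alpha> (f UNIV)) \<circ> restr_rm Lam U)"
      by (rule indep_var_compose[OF ind comp_meas[OF _ gexp_meas] comp_meas[OF _ gexp_meas]]) auto
    have ev: "((\<lambda>f. gexp \<alpha> (f UNIV)) \<circ> restr_rm Lam A) = (\<lambda>\<omega>. gexp \<alpha> (emeasure (Lam \<omega>) A))" for A
      by (simp add: restr_rm_def fun_eq_iff)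
    have "(\<integral>\<^sup>+ \<omega>. gexp \<alpha> (emeasure (Lam \<omega>) Q) * gexp \<alpha> (emeasure (Lam \<omega>) U) \<partial>M)
        = (\<integral>\<^sup>+ \<omega>. gexp \<alpha> (emeasure (Lam \<omega>) Q) \<partial>M) * (\<integral>\<^sup>+ \<omega>. gexp \<alpha> (emeasure (Lam \<omega>) U) \<partial>M)"
      using indep_var_nn_integral[OF ind2] unfolding ev .
    then show ?thesis using split IH insert.hyps by (simp add: Q_def)
  qed
qed

lemma fin_sub:
  assumes rm: "random_measure M Lam" and \<omega>: "\<omega> \<in> space M" and K: "compact K" and X: "X \<subseteq> K"
  shows "emeasure (Lam \<omega>) X < \<infinity>"
proof -
  have "K \<in> sets (Lam \<omega>)" using rm_sets[OF rm \<omega>] K by (simp add: compact_imp_closed borel_closed)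
  then have "emeasure (Lam \<omega>) X \<le> emeasure (Lam \<omega>) K" using X by (rule emeasure_mono[rotated])
  then show ?thesis using rm_fin[OF rm \<omega> K] by (rule le_less_trans)
qed

lemma class_bound:
  fixes M :: "'w measure" and Lam :: "'w \<Rightarrow> 'a::euclidean_space measure"
  assumes rm: "random_measure M Lam" and stat: "stationary_rm M Lam"
    and dep: "b_dependent M Lam b" and b: "b > 0" and \<alpha>: "\<alpha> \<ge> 0"
    and G: "finite G" "G \<subseteq> lattice"
    and par: "\<And>z z'. z \<in> G \<Longrightarrow> z' \<in> G \<Longrightarrow> (\<lambda>i\<in>Basis. even \<lfloor>z \<bullet> i\<rfloor>) = (\<lambda>i\<in>Basis. even \<lfloor>z' \<bullet> i\<rfloor>)"
  shows "(\<integral>\<^sup>+ \<omega>. gexp \<alpha> (emeasure (Lam \<omega>) (\<Union>k. \<Union>z\<in>G. cube (b - b / (real k + 2)) (b *\<^sub>R z))) \<partial>M)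
     \<le> (\<integral>\<^sup>+ \<omega>. gexp \<alpha> (emeasure (Lam \<omega>) (cube b 0)) \<partial>M) ^ card G"
proof -
  interpret prob_space M by (rule rm_prob[OF rm])
  define sk where "sk = (\<lambda>k::nat. b - b / (real k + 2))"
  define W where "W = (\<lambda>k. \<Union>z\<in>G. cube (sk k) (b *\<^sub>R z))"
  define Eb where "Eb = (\<integral>\<^sup>+ \<omega>. gexp \<alpha> (emeasure (Lam \<omega>) (cube b 0)) \<partial>M)"
  have sk: "0 \<le> sk k" "sk k < b" for k unfolding sk_def using b by (auto simp: field_simps)
  have skmono: "sk k \<le> sk k'" if "k \<le> k'" for k k'
    unfolding sk_def using b that by (auto intro!: divide_left_mono simp: field_simps)
  have Wb: "W k \<in> sets borel" for k unfolding W_def using G(1) by (auto intro!: sets.finite_UN simp: cube_borel)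
  have Winc: "incseq W" unfolding incseq_def W_def
  proof (intro allI impI)
    fix k k' :: nat assume "k \<le> k'"
    then show "(\<Union>z\<in>G. cube (sk k) (b *\<^sub>R z)) \<subseteq> (\<Union>z\<in>G. cube (sk k') (b *\<^sub>R z))"
      by (intro UN_mono order_refl cube_mono skmono)
  qed
  define Ub where "Ub = (\<Union>z\<in>G. cube b (b *\<^sub>R z))"
  have Ubc: "compact Ub" unfolding Ub_def using G(1) by (intro compact_UN) (auto simp: cube_compact)
  have Ub_sets: "Ub \<in> sets borel" unfolding Ub_def using G(1) by (auto intro!: sets.finite_UN simp: cube_borel)
  have WUb: "W k \<subseteq> Ub" for k unfolding W_def Ub_def
    by (intro UN_mono order_refl cube_mono less_imp_le sk)
  have sep: "\<forall>z\<in>G. \<forall>z'\<in>G. z \<noteq> z' \<longrightarrow> (\<exists>i\<in>Basis. 2 \<le> \<bar>z \<bullet> i - z' \<bullet> i\<bar>)"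
    using parity_sep par G(2) by blast
  have cube_le: "(\<integral>\<^sup>+ \<omega>. gexp \<alpha> (emeasure (Lam \<omega>) (cube (sk k) (b *\<^sub>R z))) \<partial>M) \<le> Eb" for k z
  proof -
    have "(\<integral>\<^sup>+ \<omega>. gexp \<alpha> (emeasure (Lam \<omega>) (cube (sk k) (b *\<^sub>R z))) \<partial>M)
        \<le> (\<integral>\<^sup>+ \<omega>. gexp \<alpha> (emeasure (Lam \<omega>) (cube b (b *\<^sub>R z))) \<partial>M)"
    proof (intro nn_integral_mono)
      fix \<omega> assume \<omega>: "\<omega> \<in> space M"
      have sets: "sets (Lam \<omega>) = sets borel" by (rule rm_sets[OF rm \<omega>])
      show "gexp \<alpha> (emeasure (Lam \<omega>) (cube (sk k) (b *\<^sub>R z))) \<le> gexp \<alpha> (emeasure (Lam \<omega>) (cube b (b *\<^sub>R z)))"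
        using sets cube_mono[OF less_imp_le[OF sk(2)], of k "b *\<^sub>R z"] rm_fin[OF rm \<omega> cube_compact]
        by (intro gexp_mono \<alpha> emeasure_mono) (auto simp: cube_borel)
    qed
    also have "\<dots> = Eb"
      unfolding Eb_def cube_translate[of b "b *\<^sub>R z"]
      by (rule stat_transfer[OF rm stat cube_borel gexp_meas])
    finally show ?thesis .
  qed
  have Wk: "(\<integral>\<^sup>+ \<omega>. gexp \<alpha> (emeasure (Lam \<omega>) (W k)) \<partial>M) \<le> Eb ^ card G" for k
  proof -
    have "(\<integral>\<^sup>+ \<omega>. gexp \<alpha> (emeasure (Lam \<omega>) (W k)) \<partial>M)
        = (\<Prod>z\<in>G. \<integral>\<^sup>+ \<omega>. gexp \<alpha> (emeasure (Lam \<omega>) (cube (sk k) (b *\<^sub>R z))) \<partial>M)"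
      unfolding W_def by (rule indep_prod[OF rm dep b sk G(1) sep])
    also have "\<dots> \<le> (\<Prod>z\<in>G. Eb)" by (rule prod_mono_ennreal) (rule cube_le)
    finally show ?thesis by simp
  qed
  have pt: "gexp \<alpha> (emeasure (Lam \<omega>) (\<Union>k. W k)) = (SUP k. gexp \<alpha> (emeasure (Lam \<omega>) (W k)))"
    if \<omega>: "\<omega> \<in> space M" for \<omega>
  proof -
    have sets: "sets (Lam \<omega>) = sets borel" by (rule rm_sets[OF rm \<omega>])
    have fin: "emeasure (Lam \<omega>) (W k) < \<infinity>" for k
      by (rule fin_sub[OF rm \<omega> Ubc WUb])
    have UW: "(\<Union>k. W k) \<subseteq> Ub" using WUb by auto
    have finU: "emeasure (Lam \<omega>) (\<Union>k. W k) < \<infinity>"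
      by (rule fin_sub[OF rm \<omega> Ubc UW])
    have lim: "(\<lambda>k. emeasure (Lam \<omega>) (W k)) \<longlonglongrightarrow> emeasure (Lam \<omega>) (\<Union>k. W k)"
      using Winc Wb sets by (intro Lim_emeasure_incseq) auto
    have lim': "(\<lambda>k. emeasure (Lam \<omega>) (W k)) \<longlonglongrightarrow> ennreal (enn2real (emeasure (Lam \<omega>) (\<Union>k. W k)))"
      using lim finU by simp
    have lim2: "(\<lambda>k. gexp \<alpha> (emeasure (Lam \<omega>) (W k))) \<longlonglongrightarrow> gexp \<alpha> (emeasure (Lam \<omega>) (\<Union>k. W k))"
      unfolding gexp_def
      by (intro tendsto_ennrealI tendsto_exp tendsto_mult tendsto_const tendsto_enn2real[OF lim']) auto
    have inc: "incseq (\<lambda>k. gexp \<alpha> (emeasure (Lam \<omega>) (W k)))"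
      using Winc fin sets Wb unfolding incseq_def by (auto intro!: gexp_mono \<alpha> emeasure_mono)
    show ?thesis using LIMSEQ_unique[OF lim2 LIMSEQ_SUP[OF inc]] .
  qed
  have "(\<integral>\<^sup>+ \<omega>. gexp \<alpha> (emeasure (Lam \<omega>) (\<Union>k. W k)) \<partial>M) = (\<integral>\<^sup>+ \<omega>. (SUP k. gexp \<alpha> (emeasure (Lam \<omega>) (W k))) \<partial>M)"
    by (rule nn_integral_cong) (rule pt)
  also have "\<dots> = (SUP k. \<integral>\<^sup>+ \<omega>. gexp \<alpha> (emeasure (Lam \<omega>) (W k)) \<partial>M)"
  proof (rule nn_integral_monotone_convergence_SUP_AE)
    fix k
    show "AE \<omega> in M. gexp \<alpha> (emeasure (Lam \<omega>) (W k)) \<le> gexp \<alpha> (emeasure (Lam \<omega>) (W (Suc k)))"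
    proof (rule AE_I2)
      fix \<omega> assume \<omega>: "\<omega> \<in> space M"
      have sets: "sets (Lam \<omega>) = sets borel" by (rule rm_sets[OF rm \<omega>])
      have "emeasure (Lam \<omega>) (W (Suc k)) < \<infinity>"
        by (rule fin_sub[OF rm \<omega> Ubc WUb])
      moreover have "W k \<subseteq> W (Suc k)" using Winc unfolding incseq_def by simp
      ultimately show "gexp \<alpha> (emeasure (Lam \<omega>) (W k)) \<le> gexp \<alpha> (emeasure (Lam \<omega>) (W (Suc k)))"
        using sets Wb by (auto intro!: gexp_mono \<alpha> emeasure_mono)
    qed
    show "(\<lambda>\<omega>. gexp \<alpha> (emeasure (Lam \<omega>) (W k))) \<in> borel_measurable M"
      by (rule measurable_compose[OF rm_meas[OF rm Wb] gexp_meas])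
  qed
  also have "\<dots> \<le> Eb ^ card G" by (rule SUP_least) (rule Wk)
  finally show ?thesis unfolding W_def sk_def Eb_def .
qed

lemma markov_Y:
  assumes P: "prob_space M" and Y: "Y \<in> borel_measurable M"
    and fin: "\<And>\<omega>. \<omega> \<in> space M \<Longrightarrow> Y \<omega> < \<infinity>" and \<alpha>: "\<alpha> \<ge> 0"
  shows "emeasure M {\<omega>\<in>space M. ennreal L' \<le> Y \<omega>} \<le> ennreal (exp (- \<alpha> * L')) * (\<integral>\<^sup>+\<omega>. gexp \<alpha> (Y \<omega>) \<partial>M)"
proof -
  let ?c = "ennreal (exp (- \<alpha> * L'))"
  have gY[measurable]: "(\<lambda>\<omega>. gexp \<alpha> (Y \<omega>)) \<in> borel_measurable M"
    by (rule measurable_compose[OF Y gexp_meas])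
  have Ym[measurable]: "Y \<in> borel_measurable M" by (rule Y)
  have sub: "{\<omega>\<in>space M. ennreal L' \<le> Y \<omega>} \<subseteq> {\<omega>\<in>space M. 1 \<le> ?c * gexp \<alpha> (Y \<omega>)}"
  proof safe
    fix \<omega> assume \<omega>: "\<omega> \<in> space M" and le: "ennreal L' \<le> Y \<omega>"
    have "Y \<omega> = ennreal (enn2real (Y \<omega>))" using fin[OF \<omega>] by simp
    then have "ennreal L' \<le> ennreal (enn2real (Y \<omega>))" using le by simp
    then have "L' \<le> enn2real (Y \<omega>)" by (simp add: ennreal_le_iff)
    then have "0 \<le> \<alpha> * (enn2real (Y \<omega>) - L')" using \<alpha> by simp
    then have "1 \<le> exp (\<alpha> * (enn2real (Y \<omega>) - L'))" by simp
    also have "exp (\<alpha> * (enn2real (Y \<omega>) - L')) = exp (- \<alpha> * L') * exp (\<alpha> * enn2real (Y \<omega>))"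
      by (simp add: exp_add[symmetric] algebra_simps)
    finally have "ennreal 1 \<le> ennreal (exp (- \<alpha> * L') * exp (\<alpha> * enn2real (Y \<omega>)))" by (rule ennreal_leI)
    then show "1 \<le> ?c * gexp \<alpha> (Y \<omega>)" unfolding gexp_def by (simp add: ennreal_mult)
  qed
  have "emeasure M {\<omega>\<in>space M. ennreal L' \<le> Y \<omega>} \<le> emeasure M {\<omega>\<in>space M. 1 \<le> ?c * gexp \<alpha> (Y \<omega>)}"
    by (rule emeasure_mono[OF sub]) measurable
  also have "\<dots> \<le> ?c * (\<integral>\<^sup>+\<omega>. gexp \<alpha> (Y \<omega>) * indicator (space M) \<omega> \<partial>M)"
    by (rule nn_integral_Markov_inequality) measurable
  also have "(\<integral>\<^sup>+\<omega>. gexp \<alpha> (Y \<omega>) * indicator (space M) \<omega> \<partial>M) = (\<integral>\<^sup>+\<omega>. gexp \<alpha> (Y \<omega>) \<partial>M)"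
    by (rule nn_integral_cong) simp
  finally show ?thesis .
qed

lemma find_k:
  fixes x c :: "'a::euclidean_space"
  assumes b: "b > 0" and lt: "\<And>i. i \<in> Basis \<Longrightarrow> \<bar>x \<bullet> i - c \<bullet> i\<bar> < b / 2"
  shows "\<exists>k::nat. x \<in> cube (b - b / (real k + 2)) c"
proof -
  define \<delta> where "\<delta> = Min ((\<lambda>i. b / 2 - \<bar>x \<bullet> i - c \<bullet> i\<bar>) ` Basis)"
  have \<delta>pos: "0 < \<delta>" unfolding \<delta>_def using lt by (simp add: Min_gr_iff)
  have \<delta>le: "\<delta> \<le> b / 2 - \<bar>x \<bullet> i - c \<bullet> i\<bar>" if "i \<in> Basis" for i
    unfolding \<delta>_def using that by (intro Min_le) auto
  obtain k :: nat where k: "b / \<delta> \<le> real k" using real_arch_simple by blast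
  have "b \<le> real k * \<delta>" using k \<delta>pos by (simp add: pos_divide_le_eq)
  also have "\<dots> \<le> (real k + 2) * \<delta>" using \<delta>pos by simp
  finally have "b / (real k + 2) \<le> \<delta>" by (simp add: divide_le_eq mult.commute)
  moreover have q0: "0 \<le> b / (real k + 2)" using b by simp
  ultimately have "x \<in> cube (b - b / (real k + 2)) c"
  proof (unfold mem_cube, intro ballI)
    fix i :: 'a assume i: "i \<in> Basis"
    define t where "t = \<bar>x \<bullet> i - c \<bullet> i\<bar>"
    define q where "q = b / (real k + 2)"
    have h: "t \<le> b / 2 - \<delta>" using \<delta>le[OF i] unfolding t_def by linarith
    have "t \<le> (b - q) / 2"
      using h q0 \<open>b / (real k + 2) \<le> \<delta>\<close> unfolding q_def[symmetric] by (simp add: field_simps)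
    then show "\<bar>x \<bullet> i - c \<bullet> i\<bar> \<le> (b - b / (real k + 2)) / 2" unfolding t_def q_def .
  qed
  then show ?thesis by blast
qed

theorem mainTheorem12:
  fixes M :: "'w measure" and Lam :: "'w \<Rightarrow> 'a::euclidean_space measure"
    and b \<alpha> L :: real and A :: "'a set"
  assumes rm: "random_measure M Lam"
    and stat: "stationary_rm M Lam"
    and bpos: "b > 0"
    and dep: "b_dependent M Lam b"
    and mom: "\<And>\<beta>. \<beta> > 0 \<Longrightarrow>
       (\<integral>\<^sup>+ \<omega>. ennreal (exp (\<beta> * measure (Lam \<omega>) (cube 1 0))) \<partial>M) < \<infinity>"
    and A: "compact A"
    and \<alpha>: "\<alpha> > 0"
    and L: "L > 0"
  shows "measure M {\<omega> \<in> space M. measure (Lam \<omega>) A \<ge> L}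
     \<le> exp (real (card {z \<in> lattice. cube b (b *\<^sub>R z) \<inter> A \<noteq> {}})
              * ln (integral\<^sup>L M (\<lambda>\<omega>. exp (\<alpha> * measure (Lam \<omega>) (cube b 0))))
            - \<alpha> * L / 2 ^ DIM('a) + real DIM('a) * ln 2)"
proof -
  interpret prob_space M by (rule rm_prob[OF rm])
  define S where "S = {z \<in> lattice. cube b (b *\<^sub>R z) \<inter> A \<noteq> {}}"
  have finS: "finite S" unfolding S_def by (rule cover_finite[OF A bpos])
  define n where "n = card S"
  define P :: "('a \<Rightarrow> bool) set" where "P = PiE Basis (\<lambda>_. UNIV)"
  have finP: "finite P" unfolding P_def by (intro finite_PiE) auto
  have cardP: "card P = 2 ^ DIM('a)" unfolding P_def by (simp add: card_PiE)
  define par where "par = (\<lambda>z::'a. \<lambda>i\<in>Basis. even \<lfloor>z \<bullet> i\<rfloor>)"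
  have parP: "par z \<in> P" for z unfolding P_def par_def by auto
  have Pne: "P \<noteq> {}" using parP by blast
  define Sp where "Sp = (\<lambda>p. {z \<in> S. par z = p})"
  have finSp: "finite (Sp p)" for p unfolding Sp_def using finS by simp
  have cardSp: "card (Sp p) \<le> n" for p unfolding n_def Sp_def using finS by (intro card_mono) auto
  define U where "U = (\<lambda>p. \<Union>k. \<Union>z\<in>Sp p. cube (b - b / (real k + 2)) (b *\<^sub>R z))"
  define Y where "Y = (\<lambda>p \<omega>. emeasure (Lam \<omega>) (U p))"
  define Eb where "Eb = (\<integral>\<^sup>+ \<omega>. gexp \<alpha> (emeasure (Lam \<omega>) (cube b 0)) \<partial>M)"
  define E where "E = integral\<^sup>L M (\<lambda>\<omega>. exp (\<alpha> * measure (Lam \<omega>) (cube b 0)))"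
  define d where "d = DIM('a)"
  have Ub: "U p \<in> sets borel" for p
    unfolding U_def using finSp[of p] by (intro sets.countable_UN) (auto intro!: sets.finite_UN simp: cube_borel)
  have Ym[measurable]: "Y p \<in> borel_measurable M" for p unfolding Y_def by (rule rm_meas[OF rm Ub])
  define Cov where "Cov = (\<Union>z\<in>S. cube b (b *\<^sub>R z))"
  have Covc: "compact Cov" unfolding Cov_def using finS by (intro compact_UN) (auto simp: cube_compact)
  have UCov: "U p \<subseteq> Cov" for p
  proof -
    have "cube (b - b / (real k + 2)) y \<subseteq> cube b y" for k y using bpos by (intro cube_mono) simp
    then show ?thesis unfolding U_def Cov_def Sp_def by blast
  qed
  have Yfin: "Y p \<omega> < \<infinity>" if "\<omega> \<in> space M" for p \<omega>
    unfolding Y_def by (rule fin_sub[OF rm that Covc UCov])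
  have Ebfin: "Eb < \<infinity>"
  proof -
    have "Eb = (\<integral>\<^sup>+ \<omega>. ennreal (exp (\<alpha> * measure (Lam \<omega>) (cube b 0))) \<partial>M)"
      unfolding Eb_def gexp_def measure_def ..
    also have "\<dots> < \<infinity>" by (rule Fin[OF rm stat mom cube_compact \<alpha>])
    finally show ?thesis .
  qed
  have EbE: "Eb = ennreal E"
  proof -
    have "enn2real Eb = E" unfolding Eb_def E_def
    proof (rule enn2real_nn_integral_eq_integral)
      show "AE x in M. gexp \<alpha> (emeasure (Lam x) (cube b 0)) = ennreal (exp (\<alpha> * measure (Lam x) (cube b 0)))"
        by (simp add: gexp_def measure_def)
      show "(\<lambda>x. exp (\<alpha> * measure (Lam x) (cube b 0))) \<in> borel_measurable M"
        by (rule measurable_compose[OF rm_meas_real[OF rm cube_borel], of "\<lambda>x. exp (\<alpha> * x)"]) measurable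
    qed simp
    then show ?thesis using Ebfin ennreal_enn2real[of Eb] by simp
  qed
  have E1: "1 \<le> E"
  proof -
    have "(1::ennreal) = (\<integral>\<^sup>+ \<omega>. 1 \<partial>M)" by (simp add: emeasure_space_1)
    also have "\<dots> \<le> Eb" unfolding Eb_def gexp_def
      using \<alpha> by (intro nn_integral_mono) (simp add: ennreal_leI)
    finally have "ennreal 1 \<le> ennreal E" using EbE by simp
    then show ?thesis by (cases "E \<ge> 0") (auto simp: ennreal_le_iff ennreal_neg)
  qed
  define c where "c = ennreal (exp (- \<alpha> * (L / 2 ^ d)))"
  have classp: "emeasure M {\<omega>\<in>space M. ennreal (L / 2 ^ d) \<le> Y p \<omega>} \<le> c * ennreal (E ^ n)" for p
  proof -
    have "emeasure M {\<omega>\<in>space M. ennreal (L / 2 ^ d) \<le> Y p \<omega>} \<le> c * (\<integral>\<^sup>+\<omega>. gexp \<alpha> (Y p \<omega>) \<partial>M)"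
      unfolding c_def by (rule markov_Y[OF prob_space_axioms Ym Yfin]) (use \<alpha> in auto)
    also have "(\<integral>\<^sup>+\<omega>. gexp \<alpha> (Y p \<omega>) \<partial>M) \<le> Eb ^ card (Sp p)"
      unfolding Y_def U_def Eb_def
    proof (rule class_bound[OF rm stat dep bpos])
      show "finite (Sp p)" by (rule finSp)
      show "Sp p \<subseteq> lattice" unfolding Sp_def S_def by auto
      show "\<And>z z'. z \<in> Sp p \<Longrightarrow> z' \<in> Sp p \<Longrightarrow> (\<lambda>i\<in>Basis. even \<lfloor>z \<bullet> i\<rfloor>) = (\<lambda>i\<in>Basis. even \<lfloor>z' \<bullet> i\<rfloor>)"
        unfolding Sp_def par_def by auto
    qed (use \<alpha> in simp)
    also have "\<dots> = ennreal (E ^ card (Sp p))" using EbE E1 by (simp add: ennreal_power)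
    also have "\<dots> \<le> ennreal (E ^ n)" using E1 cardSp[of p] by (intro ennreal_leI power_increasing) auto
    finally show ?thesis by (simp add: mult_left_mono)
  qed
  define HS where "HS = (\<lambda>(z, i, \<sigma>). (i, b * (z \<bullet> i) + \<sigma> * (b / 2))) ` (S \<times> Basis \<times> {-1, 1::real})"
  have finHS: "finite HS" unfolding HS_def using finS by simp
  have HSB: "fst h \<in> Basis" if "h \<in> HS" for h using that unfolding HS_def by auto
  define Hy where "Hy = (\<lambda>h::'a \<times> real. A \<inter> {x. x \<bullet> fst h = snd h})"
  have Hyb: "Hy h \<in> sets borel" for h unfolding Hy_def
    using A by (intro borel_closed closed_Int compact_imp_closed closed_Collect_eq continuous_intros) auto
  have good: "AE \<omega> in M. \<forall>h\<in>HS. emeasure (Lam \<omega>) (Hy h) = 0"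
    using finHS unfolding Hy_def
  proof (rule AE_finite_allI)
    fix h assume "h \<in> HS"
    then show "AE \<omega> in M. emeasure (Lam \<omega>) (A \<inter> {x. x \<bullet> fst h = snd h}) = 0"
      by (intro HP[OF rm stat mom A HSB])
  qed
  have cover: "A \<subseteq> (\<Union>p\<in>P. U p) \<union> (\<Union>h\<in>HS. Hy h)"
  proof
    fix x assume x: "x \<in> A"
    obtain z where z: "z \<in> S" "x \<in> cube b (b *\<^sub>R z)"
      using cover_cover[OF bpos x] unfolding S_def by blast
    show "x \<in> (\<Union>p\<in>P. U p) \<union> (\<Union>h\<in>HS. Hy h)"
    proof (cases "\<exists>i\<in>Basis. \<bar>x \<bullet> i - b * (z \<bullet> i)\<bar> = b / 2")
      case True
      then obtain i where i: "i \<in> Basis" "\<bar>x \<bullet> i - b * (z \<bullet> i)\<bar> = b / 2" by blast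
      have "x \<bullet> i - b * (z \<bullet> i) = b / 2 \<or> x \<bullet> i - b * (z \<bullet> i) = - (b / 2)"
        using i(2) by (cases "0 \<le> x \<bullet> i - b * (z \<bullet> i)") (auto simp: abs_of_nonneg abs_of_neg)
      then obtain \<sigma> :: real where \<sigma>: "\<sigma> \<in> {-1, 1}" "x \<bullet> i = b * (z \<bullet> i) + \<sigma> * (b / 2)"
      proof (elim disjE)
        assume "x \<bullet> i - b * (z \<bullet> i) = b / 2"
        then show ?thesis by (intro that[of 1]) auto
      next
        assume "x \<bullet> i - b * (z \<bullet> i) = - (b / 2)"
        then show ?thesis by (intro that[of "-1"]) auto
      qed
      have "(i, x \<bullet> i) \<in> HS" unfolding HS_def using z(1) i(1) \<sigma> by (auto simp: image_iff intro!: bexI[of _ "(z, i, \<sigma>)"])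
      moreover have "x \<in> Hy (i, x \<bullet> i)" unfolding Hy_def using x by simp
      ultimately show ?thesis by blast
    next
      case False
      have "\<bar>x \<bullet> i - (b *\<^sub>R z) \<bullet> i\<bar> < b / 2" if i: "i \<in> Basis" for i
        using z(2) i False by (auto simp: mem_cube less_le)
      then obtain k :: nat where k: "x \<in> cube (b - b / (real k + 2)) (b *\<^sub>R z)"
        using find_k[OF bpos] by blast
      have "z \<in> Sp (par z)" unfolding Sp_def using z(1) by simp
      then have "x \<in> U (par z)" unfolding U_def using k by blast
      then show ?thesis using parP[of z] by blast
    qed
  qed
  have Asets: "A \<in> sets borel" using A by (simp add: compact_imp_closed borel_closed)
  have pw: "emeasure (Lam \<omega>) A \<le> (\<Sum>p\<in>P. Y p \<omega>)"
    if \<omega>: "\<omega> \<in> space M" and g: "\<forall>h\<in>HS. emeasure (Lam \<omega>) (Hy h) = 0" for \<omega>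
  proof -
    have sets: "sets (Lam \<omega>) = sets borel" by (rule rm_sets[OF rm \<omega>])
    have UPs: "(\<Union>p\<in>P. U p) \<in> sets (Lam \<omega>)" using finP Ub sets by (auto intro!: sets.finite_UN)
    have HSs: "(\<Union>h\<in>HS. Hy h) \<in> sets (Lam \<omega>)" using finHS Hyb sets by (auto intro!: sets.finite_UN)
    have "emeasure (Lam \<omega>) A \<le> emeasure (Lam \<omega>) ((\<Union>p\<in>P. U p) \<union> (\<Union>h\<in>HS. Hy h))"
      using cover UPs HSs by (intro emeasure_mono) auto
    also have "\<dots> \<le> emeasure (Lam \<omega>) (\<Union>p\<in>P. U p) + emeasure (Lam \<omega>) (\<Union>h\<in>HS. Hy h)"
      using UPs HSs by (rule emeasure_subadditive)
    also have "\<dots> \<le> (\<Sum>p\<in>P. emeasure (Lam \<omega>) (U p)) + (\<Sum>h\<in>HS. emeasure (Lam \<omega>) (Hy h))"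
      using finP finHS Ub Hyb sets by (intro add_mono emeasure_subadditive_finite) auto
    also have "\<dots> = (\<Sum>p\<in>P. Y p \<omega>)" using g by (simp add: Y_def)
    finally show ?thesis .
  qed
  \<comment> \<open>pigeonhole\<close>
  have ph: "\<exists>p\<in>P. ennreal (L / 2 ^ d) \<le> Y p \<omega>"
    if \<omega>: "\<omega> \<in> space M" and g: "\<forall>h\<in>HS. emeasure (Lam \<omega>) (Hy h) = 0"
      and le: "L \<le> measure (Lam \<omega>) A" for \<omega>
  proof -
    obtain p0 where p0: "p0 \<in> P" "Max ((\<lambda>p. Y p \<omega>) ` P) = Y p0 \<omega>"
      using obtains_MAX[OF finP Pne] by metis
    have Yle: "Y p \<omega> \<le> Y p0 \<omega>" if "p \<in> P" for p
      using Max_ge[of "(\<lambda>p. Y p \<omega>) ` P" "Y p \<omega>"] finP that p0(2) by auto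
    have "ennreal L \<le> ennreal (measure (Lam \<omega>) A)" using le by (rule ennreal_leI)
    also have "\<dots> = emeasure (Lam \<omega>) A"
      using rm_fin[OF rm \<omega> A] by (intro emeasure_eq_ennreal_measure[symmetric]) simp
    also have "\<dots> \<le> (\<Sum>p\<in>P. Y p \<omega>)" by (rule pw[OF \<omega> g])
    also have "\<dots> \<le> (\<Sum>p\<in>P. Y p0 \<omega>)" by (rule sum_mono) (rule Yle)
    also have "\<dots> = of_nat (2 ^ d) * Y p0 \<omega>" using cardP by (simp add: d_def)
    also have "Y p0 \<omega> = ennreal (enn2real (Y p0 \<omega>))" using Yfin[OF \<omega>] by simp
    finally have "ennreal L \<le> ennreal (2 ^ d * enn2real (Y p0 \<omega>))"
      by (simp add: ennreal_mult ennreal_of_nat_eq_real_of_nat)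
    then have "L \<le> 2 ^ d * enn2real (Y p0 \<omega>)" by (simp add: ennreal_le_iff)
    then have "L / 2 ^ d \<le> enn2real (Y p0 \<omega>)" by (simp add: divide_le_eq mult.commute)
    then have "ennreal (L / 2 ^ d) \<le> ennreal (enn2real (Y p0 \<omega>))" by (rule ennreal_leI)
    also have "ennreal (enn2real (Y p0 \<omega>)) = Y p0 \<omega>" using Yfin[OF \<omega>, of p0] by simp
    finally show ?thesis using p0(1) by blast
  qed
  define Bp where "Bp = (\<lambda>p. {\<omega>\<in>space M. ennreal (L / 2 ^ d) \<le> Y p \<omega>})"
  have Bps: "Bp p \<in> sets M" for p unfolding Bp_def by measurable
  have "emeasure M {\<omega> \<in> space M. measure (Lam \<omega>) A \<ge> L} \<le> emeasure M (\<Union>p\<in>P. Bp p)"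
  proof (rule emeasure_mono_AE)
    show "AE x in M. x \<in> {\<omega> \<in> space M. L \<le> measure (Lam \<omega>) A} \<longrightarrow> x \<in> (\<Union>p\<in>P. Bp p)"
      using good by eventually_elim (auto simp: Bp_def dest!: ph)
    show "(\<Union>p\<in>P. Bp p) \<in> sets M" using finP Bps by (auto intro!: sets.finite_UN)
  qed
  also have "\<dots> \<le> (\<Sum>p\<in>P. emeasure M (Bp p))"
    using finP Bps by (intro emeasure_subadditive_finite) auto
  also have "\<dots> \<le> (\<Sum>p\<in>P. c * ennreal (E ^ n))"
    by (rule sum_mono) (unfold Bp_def, rule classp)
  also have "\<dots> = ennreal (2 ^ d * exp (- \<alpha> * (L / 2 ^ d)) * E ^ n)"
    using cardP E1 by (simp add: c_def d_def ennreal_mult ennreal_of_nat_eq_real_of_nat mult.assoc)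
  finally have emb: "emeasure M {\<omega> \<in> space M. measure (Lam \<omega>) A \<ge> L} \<le> ennreal (2 ^ d * exp (- \<alpha> * (L / 2 ^ d)) * E ^ n)" .
  have "measure M {\<omega> \<in> space M. measure (Lam \<omega>) A \<ge> L} \<le> 2 ^ d * exp (- \<alpha> * (L / 2 ^ d)) * E ^ n"
    unfolding measure_def[of M] by (rule enn2real_leI[OF _ emb]) (use E1 in simp)
  also have "\<dots> = exp (real n * ln E - \<alpha> * L / 2 ^ d + real d * ln 2)"
  proof -
    have "exp (real n * ln E) = E ^ n" using E1 by (simp add: exp_of_nat_mult)
    moreover have "exp (real d * ln 2) = 2 ^ d" by (simp add: exp_of_nat_mult)
    moreover have "exp (real n * ln E - \<alpha> * L / 2 ^ d + real d * ln 2)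
        = exp (real d * ln 2) * exp (- \<alpha> * (L / 2 ^ d)) * exp (real n * ln E)"
      by (simp add: exp_add[symmetric] exp_diff algebra_simps)
    ultimately show ?thesis by simp
  qed
  finally show ?thesis unfolding S_def n_def d_def E_def .
qed

end
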